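(* If $G$ is a regular hypo-efficient domination graph having at least one $\gamma$-critical vertex, then $|V(G)|=(\Delta(G)+1)(\gamma(G)-1)+1=(\delta(G)+1)(\gamma(G)-1)+1$.
   Context: All graphs are finite, simple and undirected. For $v\in V(G)$, $N[v]$ is the closed neighborhood of $v$. A set $D\subseteq V(G)$ is dominating if every vertex of $G$ not in $D$ has a neighbor in $D$; $\gamma(G)$ is the minimum size of a dominating set. A vertex $v$ is $\gamma$-critical if $\gamma(G-v)<\gamma(G)$. A set $D\subseteq V(H)$ is an efficient dominating set (EDS) of $H$ if $|N_H[v]\cap D|=1$ for every $v\in V(H)$. $G$ is a hypo-efficient domination graph if $G$ has no EDS but $G-v$ has at least one EDS for every $v\in V(G)$. $\delta(G)$, $\Delta(G)$ are the minimum and maximum degree. *)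

theory Defs
  imports Main
begin

text \<open>Vertex deletion G - v is (V - {v}, E): all notions below only look at
  edges between vertices of the given vertex set.\<close>

definition simple_graph :: "'a set \<Rightarrow> ('a \<Rightarrow> 'a \<Rightarrow> bool) \<Rightarrow> bool" where
  "simple_graph V E \<longleftrightarrow> finite V \<and> (\<forall>x y. E x y \<longrightarrow> x \<in> V \<and> y \<in> V)
     \<and> (\<forall>x y. E x y \<longrightarrow> E y x) \<and> (\<forall>x. \<not> E x x)"

definition closed_nbhd :: "'a set \<Rightarrow> ('a \<Rightarrow> 'a \<Rightarrow> bool) \<Rightarrow> 'a \<Rightarrow> 'a set" where
  "closed_nbhd V E v = {u \<in> V. u = v \<or> E v u}"

definition degree :: "'a set \<Rightarrow> ('a \<Rightarrow> 'a \<Rightarrow> bool) \<Rightarrow> 'a \<Rightarrow> nat" where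
  "degree V E v = card {u \<in> V. E v u}"

definition max_degree :: "'a set \<Rightarrow> ('a \<Rightarrow> 'a \<Rightarrow> bool) \<Rightarrow> nat" where
  "max_degree V E = Max (degree V E ` V)"

definition min_degree :: "'a set \<Rightarrow> ('a \<Rightarrow> 'a \<Rightarrow> bool) \<Rightarrow> nat" where
  "min_degree V E = Min (degree V E ` V)"

definition regular :: "'a set \<Rightarrow> ('a \<Rightarrow> 'a \<Rightarrow> bool) \<Rightarrow> bool" where
  "regular V E \<longleftrightarrow> (\<forall>u\<in>V. \<forall>w\<in>V. degree V E u = degree V E w)"

definition dominating :: "'a set \<Rightarrow> ('a \<Rightarrow> 'a \<Rightarrow> bool) \<Rightarrow> 'a set \<Rightarrow> bool" where
  "dominating V E D \<longleftrightarrow> D \<subseteq> V \<and> (\<forall>v \<in> V - D. \<exists>u \<in> D. E v u)"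

definition domination_number :: "'a set \<Rightarrow> ('a \<Rightarrow> 'a \<Rightarrow> bool) \<Rightarrow> nat" where
  "domination_number V E = Min (card ` {D. dominating V E D})"

definition gamma_critical :: "'a set \<Rightarrow> ('a \<Rightarrow> 'a \<Rightarrow> bool) \<Rightarrow> 'a \<Rightarrow> bool" where
  "gamma_critical V E v \<longleftrightarrow> v \<in> V \<and>
     domination_number (V - {v}) E < domination_number V E"

definition efficient_dominating :: "'a set \<Rightarrow> ('a \<Rightarrow> 'a \<Rightarrow> bool) \<Rightarrow> 'a set \<Rightarrow> bool" where
  "efficient_dominating V E D \<longleftrightarrow> D \<subseteq> V \<and> (\<forall>v \<in> V. card (closed_nbhd V E v \<inter> D) = 1)"

definition hypo_efficient :: "'a set \<Rightarrow> ('a \<Rightarrow> 'a \<Rightarrow> bool) \<Rightarrow> bool" where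
  "hypo_efficient V E \<longleftrightarrow> \<not> (\<exists>D. efficient_dominating V E D)
     \<and> (\<forall>v \<in> V. \<exists>D. efficient_dominating (V - {v}) E D)"

end

theory Submission
  imports Defs
begin

lemma fin_doms: "finite V \<Longrightarrow> finite (card ` {D. dominating V E D})"
proof -
  assume f: "finite V"
  have "{D. dominating V E D} \<subseteq> Pow V" by (auto simp: dominating_def)
  moreover have "finite (Pow V)" using f by simp
  ultimately have "finite {D. dominating V E D}" by (rule finite_subset)
  thus ?thesis by simp
qed

lemma dom_min: "finite V \<Longrightarrow> dominating V E D \<Longrightarrow> domination_number V E \<le> card D"
  unfolding domination_number_def using fin_doms by (metis Min_le image_eqI mem_Collect_eq)

lemma dom_ex: "finite V \<Longrightarrow> \<exists>D. dominating V E D \<and> card D = domination_number V E"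
proof -
  assume f: "finite V"
  have "dominating V E V" by (auto simp: dominating_def)
  hence "card ` {D. dominating V E D} \<noteq> {}" by blast
  from Min_in[OF fin_doms[OF f] this] show ?thesis unfolding domination_number_def by auto
qed

lemma eds_le:
  assumes sym: "\<And>x y. E x y \<Longrightarrow> E y x" and fV: "finite V"
    and D: "efficient_dominating V E D" and S: "dominating V E S"
  shows "card D \<le> card S"
proof -
  have Ssub: "S \<subseteq> V" using S by (simp add: dominating_def)
  have Dsub: "D \<subseteq> V" using D by (simp add: efficient_dominating_def)
  have ex: "\<exists>s\<in>S. s = d \<or> E d s" if "d \<in> D" for d
  proof (cases "d \<in> S")
    case False
    hence "d \<in> V - S" using that Dsub by blast
    hence "\<exists>u \<in> S. E d u" using S unfolding dominating_def by blast
    thus ?thesis by blast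
  qed blast
  define f where "f d = (SOME s. s \<in> S \<and> (s = d \<or> E d s))" for d
  have fp: "f d \<in> S \<and> (f d = d \<or> E d (f d))" if "d \<in> D" for d
    unfolding f_def using someI_ex[of "\<lambda>s. s \<in> S \<and> (s = d \<or> E d s)"] ex[OF that] by blast
  have "inj_on f D"
  proof (rule inj_onI)
    fix a b assume a: "a \<in> D" and b: "b \<in> D" and eq: "f a = f b"
    let ?s = "f a"
    have sV: "?s \<in> V" using fp[OF a] Ssub by blast
    have "a \<in> closed_nbhd V E ?s \<inter> D" "b \<in> closed_nbhd V E ?s \<inter> D"
      using fp[OF a] fp[OF b] eq a b Dsub sym by (auto simp: closed_nbhd_def)
    moreover have "card (closed_nbhd V E ?s \<inter> D) = 1" using D sV by (simp add: efficient_dominating_def)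
    ultimately show "a = b" by (metis card_1_singletonE singletonD)
  qed
  moreover have "f ` D \<subseteq> S" using fp by blast
  moreover have "finite S" using Ssub fV finite_subset by blast
  ultimately show ?thesis using card_inj_on_le by blast
qed

theorem corollary3p17:
  fixes V :: "'a set" and E :: "'a \<Rightarrow> 'a \<Rightarrow> bool"
  assumes "simple_graph V E"
    and "regular V E"
    and "hypo_efficient V E"
    and "\<exists>v. gamma_critical V E v"
  shows "card V = (max_degree V E + 1) * (domination_number V E - 1) + 1
       \<and> (max_degree V E + 1) * (domination_number V E - 1) + 1
         = (min_degree V E + 1) * (domination_number V E - 1) + 1"
proof -
  have fV: "finite V" and sym: "\<And>x y. E x y \<Longrightarrow> E y x" and inV: "\<And>x y. E x y \<Longrightarrow> x \<in> V \<and> y \<in> V"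
    and irr: "\<And>x. \<not> E x x"
    using assms(1) by (auto simp: simple_graph_def)
  obtain v where vV: "v \<in> V" and crit: "domination_number (V - {v}) E < domination_number V E"
    using assms(4) by (auto simp: gamma_critical_def)
  define k where "k = degree V E v"
  have degk: "degree V E u = k" if "u \<in> V" for u
    using assms(2) that vV unfolding regular_def k_def by blast
  have img: "degree V E ` V = {k}"
  proof
    show "degree V E ` V \<subseteq> {k}" using degk by blast
    show "{k} \<subseteq> degree V E ` V" using degk[OF vV] vV by force
  qed
  have mx: "max_degree V E = k" "min_degree V E = k"
    by (simp_all add: max_degree_def min_degree_def img)
  define V' where "V' = V - {v}"
  have fV': "finite V'" using fV V'_def by simp
  obtain D where D: "efficient_dominating V' E D"
    using assms(3) vV by (auto simp: hypo_efficient_def V'_def)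
  have DV': "D \<subseteq> V'" using D by (simp add: efficient_dominating_def)
  have fD: "finite D" using finite_subset[OF DV' fV'] .
  have one: "card (closed_nbhd V' E u \<inter> D) = 1" if "u \<in> V'" for u
    using D that by (simp add: efficient_dominating_def)
  obtain S where S: "dominating V' E S" "card S = domination_number V' E"
    using dom_ex[OF fV'] by blast
  have DS: "card D \<le> domination_number V' E" using eds_le[OF sym fV' D S(1)] S(2) by simp
  have cov: "\<exists>d\<in>D. d = u \<or> E u d" if "u \<in> V'" for u
  proof -
    from one[OF that] obtain d where "closed_nbhd V' E u \<inter> D = {d}" by (metis card_1_singletonE)
    thus ?thesis by (auto simp: closed_nbhd_def)
  qed
  have noadj: "\<forall>d\<in>D. \<not> E v d"
  proof (rule ccontr)
    assume "\<not> ?thesis"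
    then obtain d where "d \<in> D" "E v d" by blast
    have "dominating V E D" unfolding dominating_def
    proof (intro conjI ballI)
      show "D \<subseteq> V" using DV' unfolding V'_def by blast
      fix u assume u: "u \<in> V - D"
      show "\<exists>w\<in>D. E u w"
      proof (cases "u = v")
        case True thus ?thesis using \<open>d \<in> D\<close> \<open>E v d\<close> by blast
      next
        case False
        hence "u \<in> V'" using u unfolding V'_def by blast
        from cov[OF this] u show ?thesis by blast
      qed
    qed
    from dom_min[OF fV this] DS crit show False unfolding V'_def by simp
  qed
  have vD: "v \<notin> D" using DV' V'_def by blast
  have "dominating V E (insert v D)" unfolding dominating_def
  proof (intro conjI ballI)
    show "insert v D \<subseteq> V" using DV' vV unfolding V'_def by blast
    fix u assume u: "u \<in> V - insert v D"
    hence "u \<in> V'" unfolding V'_def by blast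
    from cov[OF this] u show "\<exists>w\<in>insert v D. E u w" by blast
  qed
  from dom_min[OF fV this] have "domination_number V E \<le> card D + 1"
    using vD fD by simp
  with DS crit have gam: "domination_number V E - 1 = card D" unfolding V'_def by linarith
  have nb: "closed_nbhd V' E d = closed_nbhd V E d" if "d \<in> D" for d
    using that noadj vD sym unfolding closed_nbhd_def V'_def by auto
  have cnb: "card (closed_nbhd V E d) = k + 1" if "d \<in> V" for d
  proof -
    have "closed_nbhd V E d = insert d {u \<in> V. E d u}" using that by (auto simp: closed_nbhd_def)
    moreover have "d \<notin> {u \<in> V. E d u}" using irr by simp
    ultimately show ?thesis using degk[OF that] fV by (simp add: degree_def)
  qed
  have union: "V' = (\<Union>d\<in>D. closed_nbhd V' E d)"
  proof
    show "V' \<subseteq> (\<Union>d\<in>D. closed_nbhd V' E d)"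
    proof
      fix u assume u: "u \<in> V'"
      then obtain d where "d \<in> D" "d = u \<or> E u d" using cov by blast
      thus "u \<in> (\<Union>d\<in>D. closed_nbhd V' E d)" using u sym by (auto simp: closed_nbhd_def)
    qed
  qed (auto simp: closed_nbhd_def)
  have disj: "closed_nbhd V' E a \<inter> closed_nbhd V' E b = {}" if "a \<in> D" "b \<in> D" "a \<noteq> b" for a b
  proof (rule ccontr)
    assume "closed_nbhd V' E a \<inter> closed_nbhd V' E b \<noteq> {}"
    then obtain u where u: "u \<in> closed_nbhd V' E a" "u \<in> closed_nbhd V' E b" by blast
    hence uV: "u \<in> V'" by (simp add: closed_nbhd_def)
    have "a \<in> closed_nbhd V' E u \<inter> D" "b \<in> closed_nbhd V' E u \<inter> D"
      using u that DV' sym by (auto simp: closed_nbhd_def)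
    with one[OF uV] that(3) show False by (metis card_1_singletonE singletonD)
  qed
  have "card V' = (\<Sum>d\<in>D. card (closed_nbhd V' E d))"
    apply (subst union)
    apply (rule card_UN_disjoint[OF fD])
    using fV' disj by (auto simp: closed_nbhd_def)
  also have "\<dots> = (\<Sum>d\<in>D. k + 1)"
    using nb cnb DV' V'_def by (intro sum.cong) auto
  finally have "card V' = (k+1) * card D" by simp
  moreover have "card V = card V' + 1"
  proof -
    have "card V > 0" using vV fV by (auto simp: card_gt_0_iff)
    thus ?thesis using vV V'_def by (simp add: card_Diff_singleton)
  qed
  ultimately show ?thesis using mx gam by simp
qed

end
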